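(* Consider the noisy Hegselmann–Krause model with heterogeneously prejudiced agents described in the context, with noise bound $\delta>0$ and $J_1-J_2>\epsilon+2R$, where $R=\frac{(1-\alpha)\epsilon+\delta}{\alpha}$. Suppose $\max_{i\in\mathcal{S}_1}|x_i(0)-J_1|\le R$ and $\max_{i\in\mathcal{S}_2}|x_i(0)-J_2|\le R$. If almost surely there is a finite (possibly random) time $T$ with $\max_{i\in\mathcal{S}_1}|x_i(T)-J_1|\le\frac{\delta}{\alpha}$, then almost surely $\limsup_{t\to\infty}\max_{i\in\mathcal{S}_1}|x_i(t)-J_1|\le\frac{\delta}{\alpha}$. Likewise, if almost surely there is a finite time $T$ with $\max_{i\in\mathcal{S}_2}|x_i(T)-J_2|\le\frac{\delta}{\alpha}$, then almost surely $\limsup_{t\to\infty}\max_{i\in\mathcal{S}_2}|x_i(t)-J_2|\le\frac{\delta}{\alpha}$.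
   Context: Agents $\mathcal{V}=\{1,\dots,n\}$ with opinions $x_i(t)\in[0,1]$, $t=0,1,2,\dots$. $\mathcal{V}=\mathcal{S}_1\cup\mathcal{S}_2$ with $\mathcal{S}_1\cap\mathcal{S}_2=\emptyset$; agents in $\mathcal{S}_k$ have prejudice value $J_k\in[0,1]$ ($k=1,2$). Confidence bound $\epsilon\in(0,1)$, attraction strength $\alpha\in(0,1]$. Neighbor set $\mathcal{N}_i(x(t))=\{j\in\mathcal{V}:|x_j(t)-x_i(t)|\le\epsilon\}$. For $i\in\mathcal{S}_k$, $x_i^*(t)=(1-\alpha)|\mathcal{N}_i(x(t))|^{-1}\sum_{j\in\mathcal{N}_i(x(t))}x_j(t)+\alpha J_k+\xi_i(t+1)$, and $x_i(t+1)$ equals $1$ if $x_i^*(t)>1$, $x_i^*(t)$ if $x_i^*(t)\in[0,1]$, $0$ if $x_i^*(t)<0$. The noises $\{\xi_i(t)\}_{i\in\mathcal{V},t\ge1}$ are i.i.d. with $E\xi_1(1)=0$, $E\xi_1(1)^2>0$ and $|\xi_1(1)|\le\delta$ almost surely. *)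

theory Defs
  imports "HOL-Probability.Probability"
begin

definition hk_neighbors :: "real \<Rightarrow> ('v \<Rightarrow> real) \<Rightarrow> 'v \<Rightarrow> 'v set" where
  "hk_neighbors eps x i = {j. \<bar>x j - x i\<bar> \<le> eps}"

definition clip01 :: "real \<Rightarrow> real" where
  "clip01 y = (if y > 1 then 1 else if y < 0 then 0 else y)"

definition hk_step :: "real \<Rightarrow> real \<Rightarrow> ('v \<Rightarrow> real) \<Rightarrow> ('v \<Rightarrow> real) \<Rightarrow> ('v \<Rightarrow> real) \<Rightarrow> 'v \<Rightarrow> real" where
  "hk_step eps alpha J x w i =
     clip01 ((1 - alpha) * (\<Sum>j\<in>hk_neighbors eps x i. x j) / real (card (hk_neighbors eps x i))
             + alpha * J i + w i)"

fun hk_traj :: "real \<Rightarrow> real \<Rightarrow> ('v \<Rightarrow> real) \<Rightarrow> ('v \<Rightarrow> real) \<Rightarrow> ('v \<Rightarrow> nat \<Rightarrow> 'a \<Rightarrow> real)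
                 \<Rightarrow> nat \<Rightarrow> 'a \<Rightarrow> 'v \<Rightarrow> real" where
  "hk_traj eps alpha J x0 xi 0 \<omega> = x0"
| "hk_traj eps alpha J x0 xi (Suc t) \<omega> =
     hk_step eps alpha J (hk_traj eps alpha J x0 xi t \<omega>) (\<lambda>i. xi i (Suc t) \<omega>)"

end

theory Submission
  imports Defs
begin

lemma clip_close: "J \<in> {0..1} \<Longrightarrow> \<bar>clip01 y - J\<bar> \<le> \<bar>y - J\<bar>"
  by (auto simp: clip01_def)

lemma step_bound:
  fixes x w :: "'v::finite \<Rightarrow> real" and A B :: "'v set"
  assumes AB: "A \<union> B = UNIV" and Jin: "JA \<in> {0..1}"
    and JA: "\<forall>i\<in>A. J i = JA"
    and alpha: "0 < alpha" "alpha \<le> 1"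
    and xa: "\<forall>i\<in>A. \<bar>x i - JA\<bar> \<le> a"
    and xb: "\<forall>i\<in>B. \<bar>x i - JB\<bar> \<le> b"
    and sep: "\<bar>JA - JB\<bar> > eps + a + b"
    and w: "\<forall>i. \<bar>w i\<bar> \<le> delta"
    and i: "i \<in> A"
    and eps0: "0 \<le> eps"
  shows "\<bar>hk_step eps alpha J x w i - JA\<bar> \<le> (1 - alpha) * a + delta"
proof -
  let ?N = "hk_neighbors eps x i"
  have iN: "i \<in> ?N" using eps0 by (auto simp: hk_neighbors_def)
  have sub: "?N \<subseteq> A"
  proof
    fix j assume j: "j \<in> ?N"
    show "j \<in> A"
    proof (rule ccontr)
      assume "j \<notin> A" then have "j \<in> B" using AB by auto
      then have "\<bar>x j - JB\<bar> \<le> b" using xb by auto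
      moreover have "\<bar>x i - JA\<bar> \<le> a" using xa i by auto
      moreover have "\<bar>x j - x i\<bar> \<le> eps" using j by (simp add: hk_neighbors_def)
      ultimately show False using sep by linarith
    qed
  qed
  have fin: "finite ?N" by simp
  have cpos: "card ?N > 0" using iN fin card_gt_0_iff by blast
  have "\<bar>(\<Sum>j\<in>?N. x j - JA)\<bar> \<le> (\<Sum>j\<in>?N. \<bar>x j - JA\<bar>)" by (rule sum_abs)
  also have "\<dots> \<le> (\<Sum>j\<in>?N. a)" by (rule sum_mono) (use sub xa in auto)
  finally have s: "\<bar>(\<Sum>j\<in>?N. x j) - real (card ?N) * JA\<bar> \<le> real (card ?N) * a"
    by (simp add: sum_subtractf)
  have avg: "\<bar>(\<Sum>j\<in>?N. x j) / real (card ?N) - JA\<bar> \<le> a"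
  proof -
    have "(\<Sum>j\<in>?N. x j) / real (card ?N) - JA = ((\<Sum>j\<in>?N. x j) - real (card ?N) * JA) / real (card ?N)"
      using cpos iN by (auto simp: diff_divide_distrib)
    then have "\<bar>(\<Sum>j\<in>?N. x j) / real (card ?N) - JA\<bar> = \<bar>(\<Sum>j\<in>?N. x j) - real (card ?N) * JA\<bar> / real (card ?N)"
      by simp
    also have "\<dots> \<le> real (card ?N) * a / real (card ?N)"
      using s cpos by (intro divide_right_mono) auto
    finally show ?thesis using cpos iN by (auto split: if_splits)
  qed
  let ?y = "(1 - alpha) * (\<Sum>j\<in>?N. x j) / real (card ?N) + alpha * J i + w i"
  have "?y - JA = (1 - alpha) * ((\<Sum>j\<in>?N. x j) / real (card ?N) - JA) + w i"
    using JA i by (simp add: algebra_simps)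
  then have "\<bar>?y - JA\<bar> \<le> \<bar>(1 - alpha) * ((\<Sum>j\<in>?N. x j) / real (card ?N) - JA)\<bar> + \<bar>w i\<bar>"
    by (metis abs_triangle_ineq)
  also have "\<dots> = (1 - alpha) * \<bar>(\<Sum>j\<in>?N. x j) / real (card ?N) - JA\<bar> + \<bar>w i\<bar>"
    using alpha by (simp add: abs_mult)
  also have "\<dots> \<le> (1 - alpha) * a + delta"
    using avg alpha w by (intro add_mono mult_left_mono) auto
  finally have "\<bar>?y - JA\<bar> \<le> (1 - alpha) * a + delta" .
  then show ?thesis unfolding hk_step_def using clip_close[OF Jin] by (meson order_trans)
qed

theorem lemma4:
  fixes M :: "'a measure"
    and S1 S2 :: "'v::finite set"
    and J1 J2 eps alpha delta R :: real
    and x0 :: "'v \<Rightarrow> real"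
    and xi :: "'v \<Rightarrow> nat \<Rightarrow> 'a \<Rightarrow> real"
    and x :: "nat \<Rightarrow> 'a \<Rightarrow> 'v \<Rightarrow> real"
  assumes M: "prob_space M"
    and part: "S1 \<union> S2 = UNIV" "S1 \<inter> S2 = {}"
    and nonempty: "S1 \<noteq> {}" "S2 \<noteq> {}"
    and J: "J1 \<in> {0..1}" "J2 \<in> {0..1}"
    and eps: "0 < eps" "eps < 1"
    and alpha: "0 < alpha" "alpha \<le> 1"
    and x0: "\<forall>i. x0 i \<in> {0..1}"
    and meas: "\<forall>i t. 1 \<le> t \<longrightarrow> xi i t \<in> borel_measurable M"
    and indep: "prob_space.indep_vars M (\<lambda>_. borel) (\<lambda>p. xi (fst p) (snd p)) (UNIV \<times> {1..})"
    and ident: "\<forall>i j s t. 1 \<le> s \<longrightarrow> 1 \<le> t \<longrightarrow> distr M borel (xi i s) = distr M borel (xi j t)"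
    and mean0: "\<forall>i t. 1 \<le> t \<longrightarrow> integrable M (xi i t) \<and> integral\<^sup>L M (xi i t) = 0"
    and var_pos: "\<forall>i t. 1 \<le> t \<longrightarrow> integral\<^sup>L M (\<lambda>\<omega>. (xi i t \<omega>)^2) > 0"
    and delta: "0 < delta"
    and bounded: "\<forall>i t. 1 \<le> t \<longrightarrow> (AE \<omega> in M. \<bar>xi i t \<omega>\<bar> \<le> delta)"
    and R_def: "R = ((1 - alpha) * eps + delta) / alpha"
    and sep: "J1 - J2 > eps + 2 * R"
    and x_def: "x = hk_traj eps alpha (\<lambda>i. if i \<in> S1 then J1 else J2) x0 xi"
    and init1: "Max ((\<lambda>i. \<bar>x0 i - J1\<bar>) ` S1) \<le> R"
    and init2: "Max ((\<lambda>i. \<bar>x0 i - J2\<bar>) ` S2) \<le> R"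
  shows "((AE \<omega> in M. \<exists>T. Max ((\<lambda>i. \<bar>x T \<omega> i - J1\<bar>) ` S1) \<le> delta / alpha)
            \<longrightarrow> (AE \<omega> in M. limsup (\<lambda>t. ereal (Max ((\<lambda>i. \<bar>x t \<omega> i - J1\<bar>) ` S1)))
                               \<le> ereal (delta / alpha)))
       \<and> ((AE \<omega> in M. \<exists>T. Max ((\<lambda>i. \<bar>x T \<omega> i - J2\<bar>) ` S2) \<le> delta / alpha)
            \<longrightarrow> (AE \<omega> in M. limsup (\<lambda>t. ereal (Max ((\<lambda>i. \<bar>x t \<omega> i - J2\<bar>) ` S2)))
                               \<le> ereal (delta / alpha)))"
proof -
  let ?J = "\<lambda>i. if i \<in> S1 then J1 else J2"
  have fin1: "finite S1" and fin2: "finite S2" by auto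
  have JS1: "\<forall>i\<in>S1. ?J i = J1" by simp
  have JS2: "\<forall>i\<in>S2. ?J i = J2" using part by auto
  have xS: "x (Suc t) \<omega> = hk_step eps alpha ?J (x t \<omega>) (\<lambda>i. xi i (Suc t) \<omega>)" for t \<omega>
    by (simp add: x_def)
  have dR: "delta / alpha \<le> R" using R_def alpha eps
    by (simp add: divide_right_mono)
  have R0: "R \<ge> 0" using dR delta alpha by (smt (verit) divide_pos_pos)
  have Rstep: "(1 - alpha) * R + delta \<le> R"
  proof -
    have "alpha * R = (1 - alpha) * eps + delta" using R_def alpha by simp
    then have "(1 - alpha) * R + delta = R - (1 - alpha) * eps" by (simp add: algebra_simps)
    moreover have "(1 - alpha) * eps \<ge> 0" using alpha eps by simp
    ultimately show ?thesis by linarith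
  qed
  have dstep: "(1 - alpha) * (delta / alpha) + delta = delta / alpha"
    using alpha by (simp add: field_simps)
  have AEw: "AE \<omega> in M. \<forall>t. \<forall>i\<in>UNIV. \<bar>xi i (Suc t) \<omega>\<bar> \<le> delta"
    apply (subst AE_all_countable)
    apply (intro allI)
    apply (subst AE_finite_all)
    using bounded by auto
  have good: "(\<forall>i\<in>S1. \<bar>x t \<omega> i - J1\<bar> \<le> R) \<and> (\<forall>i\<in>S2. \<bar>x t \<omega> i - J2\<bar> \<le> R)"
    if w: "\<forall>t. \<forall>i\<in>UNIV. \<bar>xi i (Suc t) \<omega>\<bar> \<le> delta" for t \<omega>
  proof (induction t)
    case 0
    then show ?case using init1 init2 fin1 fin2 nonempty by (simp add: x_def)
  next
    case (Suc t)
    have w': "\<forall>i. \<bar>xi i (Suc t) \<omega>\<bar> \<le> delta" using w by auto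
    have a: "\<forall>i\<in>S1. \<bar>x (Suc t) \<omega> i - J1\<bar> \<le> R"
    proof
      fix i assume "i \<in> S1"
      have "\<bar>x (Suc t) \<omega> i - J1\<bar> \<le> (1 - alpha) * R + delta"
        unfolding xS
        by (rule step_bound[OF part(1) J(1) JS1 alpha _ _ _ w' \<open>i\<in>S1\<close>, of _ R J2 R])
           (use Suc sep eps in auto)
      then show "\<bar>x (Suc t) \<omega> i - J1\<bar> \<le> R" using Rstep by linarith
    qed
    have b: "\<forall>i\<in>S2. \<bar>x (Suc t) \<omega> i - J2\<bar> \<le> R"
    proof
      fix i assume "i \<in> S2"
      have p: "S2 \<union> S1 = UNIV" using part by auto
      have "\<bar>x (Suc t) \<omega> i - J2\<bar> \<le> (1 - alpha) * R + delta"
        unfolding xS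
        by (rule step_bound[OF p J(2) JS2 alpha _ _ _ w' \<open>i\<in>S2\<close>, of _ R J1 R])
           (use Suc sep eps in auto)
      then show "\<bar>x (Suc t) \<omega> i - J2\<bar> \<le> R" using Rstep by linarith
    qed
    show ?case using a b by blast
  qed
  have fin_part1: "limsup (\<lambda>t. ereal (Max ((\<lambda>i. \<bar>x t \<omega> i - J1\<bar>) ` S1))) \<le> ereal (delta / alpha)"
    if w: "\<forall>t. \<forall>i\<in>UNIV. \<bar>xi i (Suc t) \<omega>\<bar> \<le> delta"
      and T: "Max ((\<lambda>i. \<bar>x T \<omega> i - J1\<bar>) ` S1) \<le> delta / alpha" for \<omega> T
  proof -
    have "\<forall>i\<in>S1. \<bar>x (T + k) \<omega> i - J1\<bar> \<le> delta / alpha" for k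
    proof (induction k)
      case 0 then show ?case using T fin1 nonempty by simp
    next
      case (Suc k)
      have w': "\<forall>i. \<bar>xi i (Suc (T + k)) \<omega>\<bar> \<le> delta" using w by auto
      have G: "\<forall>i\<in>S2. \<bar>x (T + k) \<omega> i - J2\<bar> \<le> R" using good[OF w] by blast
      show ?case
      proof
        fix i assume "i \<in> S1"
        have "\<bar>x (Suc (T + k)) \<omega> i - J1\<bar> \<le> (1 - alpha) * (delta / alpha) + delta"
          unfolding xS
          by (rule step_bound[OF part(1) J(1) JS1 alpha _ _ _ w' \<open>i\<in>S1\<close>, of _ "delta/alpha" J2 R])
             (use Suc G sep dR eps in auto)
        then show "\<bar>x (T + Suc k) \<omega> i - J1\<bar> \<le> delta / alpha" using dstep by simp
      qed
    qed
    then have ev: "eventually (\<lambda>t. ereal (Max ((\<lambda>i. \<bar>x t \<omega> i - J1\<bar>) ` S1)) \<le> ereal (delta / alpha)) sequentially"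
      using fin1 nonempty
      by (auto simp: eventually_sequentially intro!: exI[of _ T] dest!: le_Suc_ex)
    show ?thesis
      using Limsup_mono[OF ev] by (simp add: Limsup_const)
  qed
  have fin_part2: "limsup (\<lambda>t. ereal (Max ((\<lambda>i. \<bar>x t \<omega> i - J2\<bar>) ` S2))) \<le> ereal (delta / alpha)"
    if w: "\<forall>t. \<forall>i\<in>UNIV. \<bar>xi i (Suc t) \<omega>\<bar> \<le> delta"
      and T: "Max ((\<lambda>i. \<bar>x T \<omega> i - J2\<bar>) ` S2) \<le> delta / alpha" for \<omega> T
  proof -
    have p: "S2 \<union> S1 = UNIV" using part by auto
    have "\<forall>i\<in>S2. \<bar>x (T + k) \<omega> i - J2\<bar> \<le> delta / alpha" for k
    proof (induction k)
      case 0 then show ?case using T fin2 nonempty by simp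
    next
      case (Suc k)
      have w': "\<forall>i. \<bar>xi i (Suc (T + k)) \<omega>\<bar> \<le> delta" using w by auto
      have G: "\<forall>i\<in>S1. \<bar>x (T + k) \<omega> i - J1\<bar> \<le> R" using good[OF w] by blast
      show ?case
      proof
        fix i assume "i \<in> S2"
        have "\<bar>x (Suc (T + k)) \<omega> i - J2\<bar> \<le> (1 - alpha) * (delta / alpha) + delta"
          unfolding xS
          by (rule step_bound[OF p J(2) JS2 alpha _ _ _ w' \<open>i\<in>S2\<close>, of _ "delta/alpha" J1 R])
             (use Suc G sep dR eps in auto)
        then show "\<bar>x (T + Suc k) \<omega> i - J2\<bar> \<le> delta / alpha" using dstep by simp
      qed
    qed
    then have ev: "eventually (\<lambda>t. ereal (Max ((\<lambda>i. \<bar>x t \<omega> i - J2\<bar>) ` S2)) \<le> ereal (delta / alpha)) sequentially"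
      using fin2 nonempty
      by (auto simp: eventually_sequentially intro!: exI[of _ T] dest!: le_Suc_ex)
    show ?thesis
      using Limsup_mono[OF ev] by (simp add: Limsup_const)
  qed
  show ?thesis
  proof (intro conjI impI)
    assume "AE \<omega> in M. \<exists>T. Max ((\<lambda>i. \<bar>x T \<omega> i - J1\<bar>) ` S1) \<le> delta / alpha"
    then show "AE \<omega> in M. limsup (\<lambda>t. ereal (Max ((\<lambda>i. \<bar>x t \<omega> i - J1\<bar>) ` S1))) \<le> ereal (delta / alpha)"
      using AEw by eventually_elim (use fin_part1 in blast)
  next
    assume "AE \<omega> in M. \<exists>T. Max ((\<lambda>i. \<bar>x T \<omega> i - J2\<bar>) ` S2) \<le> delta / alpha"
    then show "AE \<omega> in M. limsup (\<lambda>t. ereal (Max ((\<lambda>i. \<bar>x t \<omega> i - J2\<bar>) ` S2))) \<le> ereal (delta / alpha)"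
      using AEw by eventually_elim (use fin_part2 in blast)
  qed
qed

end
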